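(* Let $\mathbb{K}=\mathbb{R}$ or $\mathbb{C}$, $1\le m\le r$, $\theta_1\ge\cdots\ge\theta_m>0>\theta_{m+1}\ge\cdots\ge\theta_r$. Let $G=(g_1,\ldots,g_r)$ be a random vector in $\mathbb{K}^r$, $(G(k))_{k\ge1}$ i.i.d. copies, $G_i^n=(g_i(1),\ldots,g_i(n))^T$, and $X_n$ deterministic real diagonal with eigenvalues $\lambda_1^n\ge\cdots\ge\lambda_n^n$. Let $\widetilde{X_n}$ be given by either the i.i.d. perturbation model $X_n+\frac1n\sum_i\theta_iG_i^n(G_i^n)^*$ or the orthonormalized perturbation model $X_n+\sum_i\theta_iU_i^n(U_i^n)^*$ ($(U_i^n)$ Gram–Schmidt orthonormalization of $(G_i^n)$), with eigenvalues $\widetilde\lambda_1^n\ge\cdots\ge\widetilde\lambda_n^n$. Assume (A) $\frac1n\sum_i\delta_{\lambda_i^n}$ converges weakly to a compactly supported probability measure $\mu$ with support bounds $a\le b$; (B) $\mathbb{E}e^{\alpha\sum_i|g_i|^2}<\infty$ for some $\alpha>0$ and, in the orthonormalized model, $\mathbb{P}(\sum_i\lambda_ig_i=0)=0$ for all $\lambda\in\mathbb{K}^r\setminus\{0\}$; (C) $\lambda_1^n\to b$ and $\lambda_n^n\to a$. Then the law of $(\widetilde\lambda_1^n,\ldots,\widetilde\lambda_m^n)$ is exponentially tight in the scale $n$.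
   Context: Exponential tightness in the scale $n$: for every $M>0$ there is a compact $\mathcal C\subset\mathbb{R}^m$ with $\limsup_n\frac1n\log\mathbb{P}((\widetilde\lambda_1^n,\ldots,\widetilde\lambda_m^n)\notin\mathcal C)\le-M$. *)

theory Defs
  imports "HOL-Probability.Probability" "Jordan_Normal_Form.Char_Poly" "Jordan_Normal_Form.Gram_Schmidt"
begin

(* The scalar field K is R or C, modelled as a subset of C. *)
definition Kset :: "bool \<Rightarrow> complex set" where
  "Kset real_case = (if real_case then \<real> else UNIV)"

definition measure_support :: "real measure \<Rightarrow> real set" where
  "measure_support \<mu> = {x. \<forall>e>0. measure \<mu> (ball x e) > 0}"

definition empirical_measure :: "nat \<Rightarrow> (nat \<Rightarrow> real) \<Rightarrow> real measure" where
  "empirical_measure n d = measure_pmf (map_pmf d (pmf_of_set {..<n}))"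

(* eigenvalues (with multiplicity) of a complex square matrix, i.e. the roots of its characteristic
   polynomial; for a Hermitian matrix these are real, and we list their real parts in
   nonincreasing order: eig_desc A ! (j-1) is the j-th largest eigenvalue *)
definition eig_list :: "complex mat \<Rightarrow> complex list" where
  "eig_list A = (SOME as. char_poly A = (\<Prod>a\<leftarrow>as. [:- a, 1:]) \<and> length as = dim_row A)"

definition eig_desc :: "complex mat \<Rightarrow> real list" where
  "eig_desc A = rev (sort (map Re (eig_list A)))"

(* the column vector G_i^n = (g_i(1),...,g_i(n))^T ; here g i k is g_i(k+1) *)
definition Gvec :: "nat \<Rightarrow> (nat \<Rightarrow> nat \<Rightarrow> 'w \<Rightarrow> complex) \<Rightarrow> nat \<Rightarrow> 'w \<Rightarrow> complex vec" where
  "Gvec n g i \<omega> = vec n (\<lambda>k. g i k \<omega>)"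

definition vnorm :: "complex vec \<Rightarrow> real" where
  "vnorm u = sqrt (\<Sum>j<dim_vec u. (cmod (u $ j))\<^sup>2)"

definition normalize_vec :: "complex vec \<Rightarrow> complex vec" where
  "normalize_vec u = complex_of_real (1 / vnorm u) \<cdot>\<^sub>v u"

definition Uvec :: "nat \<Rightarrow> nat \<Rightarrow> (nat \<Rightarrow> nat \<Rightarrow> 'w \<Rightarrow> complex) \<Rightarrow> nat \<Rightarrow> 'w \<Rightarrow> complex vec" where
  "Uvec r n g i \<omega> = normalize_vec (gram_schmidt n (map (\<lambda>i'. Gvec n g i' \<omega>) [0..<r]) ! i)"

definition perturbed :: "nat \<Rightarrow> (nat \<Rightarrow> real) \<Rightarrow> nat \<Rightarrow> (nat \<Rightarrow> real) \<Rightarrow> real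
    \<Rightarrow> (nat \<Rightarrow> complex vec) \<Rightarrow> complex mat" where
  "perturbed n dn r \<theta> c v = mat n n (\<lambda>(j,l). (if j = l then complex_of_real (dn j) else 0)
      + (\<Sum>i<r. complex_of_real (c * \<theta> i) * (v i $ j) * cnj (v i $ l)))"

definition Xtilde :: "bool \<Rightarrow> nat \<Rightarrow> (nat \<Rightarrow> nat \<Rightarrow> real) \<Rightarrow> nat \<Rightarrow> (nat \<Rightarrow> real)
    \<Rightarrow> (nat \<Rightarrow> nat \<Rightarrow> 'w \<Rightarrow> complex) \<Rightarrow> 'w \<Rightarrow> complex mat" where
  "Xtilde orth n d r \<theta> g \<omega> =
     (if orth then perturbed n (d n) r \<theta> 1 (\<lambda>i. Uvec r n g i \<omega>)
      else perturbed n (d n) r \<theta> (1 / real n) (\<lambda>i. Gvec n g i \<omega>))"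

definition ln_ereal :: "real \<Rightarrow> ereal" where
  "ln_ereal p = (if p \<le> 0 then -\<infinity> else ereal (ln p))"

end

theory Submission
  imports Defs
begin


lemma eig_list_prop:
  fixes A :: "complex mat" assumes "A \<in> carrier_mat n n"
  shows "char_poly A = (\<Prod>a\<leftarrow>eig_list A. [:- a, 1:]) \<and> length (eig_list A) = dim_row A"
proof -
  from char_poly_factorized[OF assms] obtain as where
    "char_poly A = (\<Prod>a\<leftarrow>as. [:- a, 1:]) \<and> length as = n" by blast
  hence "\<exists>as. char_poly A = (\<Prod>a\<leftarrow>as. [:- a, 1:]) \<and> length as = dim_row A" using assms by auto
  thus ?thesis unfolding eig_list_def by (rule someI_ex)
qed

lemma poly_prod_root: "(l::complex) \<in> set xs \<Longrightarrow> poly (\<Prod>a\<leftarrow>xs. [:- a, 1:]) l = 0"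
  by (induction xs) auto

lemma eig_list_eigenvalue:
  fixes A :: "complex mat" assumes A: "A \<in> carrier_mat n n" and l: "l \<in> set (eig_list A)"
  shows "eigenvalue A l"
proof -
  have cp: "char_poly A = (\<Prod>a\<leftarrow>eig_list A. [:- a, 1:])" using eig_list_prop[OF A] by blast
  have "poly (char_poly A) l = 0"
    unfolding cp using l by (rule poly_prod_root)
  thus ?thesis using eigenvalue_root_char_poly[OF A] by blast
qed

lemma eig_desc_nth:
  fixes A :: "complex mat" assumes A: "A \<in> carrier_mat n n" and j: "j < n"
  shows "\<exists>l. eigenvalue A l \<and> eig_desc A ! j = Re l"
proof -
  have len: "length (eig_list A) = n" using eig_list_prop[OF A] A by auto
  let ?xs = "rev (sort (map Re (eig_list A)))"
  have "j < length ?xs" using len j by simp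
  hence "?xs ! j \<in> set ?xs" by (rule nth_mem)
  hence "?xs ! j \<in> Re ` set (eig_list A)" by simp
  then obtain l where "l \<in> set (eig_list A)" "?xs ! j = Re l" by auto
  thus ?thesis using eig_list_eigenvalue[OF A] unfolding eig_desc_def by blast
qed



lemma perturbed_carrier: "perturbed n dn r \<theta> c v \<in> carrier_mat n n"
  unfolding perturbed_def by simp

lemma cs_complex:
  fixes a b :: "nat \<Rightarrow> complex"
  shows "(cmod (\<Sum>l<n. cnj (a l) * b l))\<^sup>2 \<le> (\<Sum>l<n. (cmod (a l))\<^sup>2) * (\<Sum>l<n. (cmod (b l))\<^sup>2)"
proof -
  have "cmod (\<Sum>l<n. cnj (a l) * b l) \<le> (\<Sum>l<n. cmod (cnj (a l) * b l))" by (rule norm_sum)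
  also have "\<dots> = (\<Sum>l<n. cmod (a l) * cmod (b l))" by (simp add: norm_mult)
  finally have h: "cmod (\<Sum>l<n. cnj (a l) * b l) \<le> (\<Sum>l<n. cmod (a l) * cmod (b l))" .
  have "(cmod (\<Sum>l<n. cnj (a l) * b l))\<^sup>2 \<le> (\<Sum>l<n. cmod (a l) * cmod (b l))\<^sup>2"
    by (rule power_mono[OF h]) simp
  also have "\<dots> \<le> (\<Sum>l<n. (cmod (a l))\<^sup>2) * (\<Sum>l<n. (cmod (b l))\<^sup>2)"
    by (rule Cauchy_Schwarz_ineq_sum)
  finally show ?thesis .
qed

lemma eig_bound:
  fixes dn :: "nat \<Rightarrow> real" and v :: "nat \<Rightarrow> complex vec"
  assumes ev: "eigenvalue (perturbed n dn r \<theta> c v) l" and D: "\<forall>j<n. \<bar>dn j\<bar> \<le> D"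
  shows "cmod l \<le> D + (\<Sum>i<r. \<bar>c * \<theta> i\<bar> * (\<Sum>j<n. (cmod (v i $ j))\<^sup>2))"
proof -
  let ?A = "perturbed n dn r \<theta> c v"
  have dimA: "dim_row ?A = n" "dim_col ?A = n" unfolding perturbed_def by auto
  obtain x where x: "x \<in> carrier_vec n" "x \<noteq> 0\<^sub>v n" "?A *\<^sub>v x = l \<cdot>\<^sub>v x"
    using ev unfolding eigenvalue_def eigenvector_def dimA by blast
  define p where "p i = (\<Sum>k<n. cnj (v i $ k) * x $ k)" for i
  define N where "N = (\<Sum>j<n. (cmod (x $ j))\<^sup>2)"
  define NV where "NV i = (\<Sum>j<n. (cmod (v i $ j))\<^sup>2)" for i
  have dimx: "dim_vec x = n" using x by auto
  have comp: "l * x $ j = complex_of_real (dn j) * x $ j + (\<Sum>i<r. complex_of_real (c * \<theta> i) * v i $ j * p i)"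
    if j: "j < n" for j
  proof -
    have "l * x $ j = (?A *\<^sub>v x) $ j" using x(3) j dimx by simp
    also have "\<dots> = (\<Sum>k<n. ((if j = k then complex_of_real (dn j) else 0)
      + (\<Sum>i<r. complex_of_real (c * \<theta> i) * (v i $ j) * cnj (v i $ k))) * x $ k)"
      using j dimx unfolding perturbed_def
      by (auto simp: lessThan_atLeast0 scalar_prod_def intro!: sum.cong)
    also have "\<dots> = (\<Sum>k<n. (if j = k then complex_of_real (dn j) else 0) * x $ k)
       + (\<Sum>k<n. \<Sum>i<r. complex_of_real (c * \<theta> i) * v i $ j * (cnj (v i $ k) * x $ k))"
      by (simp add: distrib_right sum.distrib sum_distrib_right mult.assoc)
    also have "(\<Sum>k<n. (if j = k then complex_of_real (dn j) else 0) * x $ k) = complex_of_real (dn j) * x $ j"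
    proof -
      have "(\<Sum>k<n. (if j = k then complex_of_real (dn j) else 0) * x $ k)
          = (\<Sum>k<n. if j = k then complex_of_real (dn j) * x $ k else 0)"
        by (intro sum.cong) auto
      also have "\<dots> = complex_of_real (dn j) * x $ j" using j by (simp add: sum.delta')
      finally show ?thesis .
    qed
    also have "(\<Sum>k<n. \<Sum>i<r. complex_of_real (c * \<theta> i) * v i $ j * (cnj (v i $ k) * x $ k))
       = (\<Sum>i<r. complex_of_real (c * \<theta> i) * v i $ j * p i)"
      unfolding p_def by (subst sum.swap) (simp add: sum_distrib_left)
    finally show ?thesis .
  qed
  have "complex_of_real N * l = (\<Sum>j<n. (l * x $ j) * cnj (x $ j))"
    unfolding N_def of_real_sum sum_distrib_right
    by (intro sum.cong refl) (simp only: complex_norm_square mult_ac)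
  also have "\<dots> = (\<Sum>j<n. complex_of_real (dn j) * (x $ j * cnj (x $ j)))
      + (\<Sum>j<n. \<Sum>i<r. complex_of_real (c * \<theta> i) * p i * (v i $ j * cnj (x $ j)))"
    unfolding sum.distrib[symmetric]
    by (intro sum.cong refl) (simp add: comp distrib_right distrib_left sum_distrib_right sum_distrib_left mult_ac)
  also have "(\<Sum>j<n. \<Sum>i<r. complex_of_real (c * \<theta> i) * p i * (v i $ j * cnj (x $ j)))
     = (\<Sum>i<r. complex_of_real (c * \<theta> i) * (p i * cnj (p i)))"
    unfolding p_def by (subst sum.swap) (simp add: sum_distrib_left mult_ac)
  finally have eq: "complex_of_real N * l = (\<Sum>j<n. complex_of_real (dn j) * (x $ j * cnj (x $ j)))
      + (\<Sum>i<r. complex_of_real (c * \<theta> i) * (p i * cnj (p i)))" .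
  have Npos: "N > 0"
  proof -
    obtain j where "j < n" "x $ j \<noteq> 0" using x dimx by (metis eq_vecI index_zero_vec(1,2))
    hence "0 < (cmod (x $ j))\<^sup>2" by simp
    also have "\<dots> \<le> N" unfolding N_def using \<open>j < n\<close>
      by (intro member_le_sum) auto
    finally show ?thesis .
  qed
  have "N * cmod l = cmod (complex_of_real N * l)" using Npos by (simp add: norm_mult)
  also have "\<dots> \<le> cmod (\<Sum>j<n. complex_of_real (dn j) * (x $ j * cnj (x $ j)))
      + cmod (\<Sum>i<r. complex_of_real (c * \<theta> i) * (p i * cnj (p i)))"
    unfolding eq by (rule norm_triangle_ineq)
  also have "\<dots> \<le> (\<Sum>j<n. D * (cmod (x $ j))\<^sup>2) + (\<Sum>i<r. \<bar>c * \<theta> i\<bar> * (NV i * N))"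
  proof (rule add_mono)
    show "cmod (\<Sum>j<n. complex_of_real (dn j) * (x $ j * cnj (x $ j))) \<le> (\<Sum>j<n. D * (cmod (x $ j))\<^sup>2)"
      apply (rule order_trans[OF norm_sum], rule sum_mono)
      using D by (auto simp: norm_mult complex_norm_square[symmetric] power2_eq_square intro!: mult_right_mono)
    show "cmod (\<Sum>i<r. complex_of_real (c * \<theta> i) * (p i * cnj (p i))) \<le> (\<Sum>i<r. \<bar>c * \<theta> i\<bar> * (NV i * N))"
      apply (rule order_trans[OF norm_sum], rule sum_mono)
    proof -
      fix i assume "i \<in> {..<r}"
      have "cmod (complex_of_real (c * \<theta> i) * (p i * cnj (p i))) = \<bar>c * \<theta> i\<bar> * (cmod (p i))\<^sup>2"
        by (simp add: norm_mult power2_eq_square abs_mult)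
      also have "\<dots> \<le> \<bar>c * \<theta> i\<bar> * (NV i * N)"
        unfolding p_def NV_def N_def by (intro mult_left_mono cs_complex) auto
      finally show "cmod (complex_of_real (c * \<theta> i) * (p i * cnj (p i))) \<le> \<bar>c * \<theta> i\<bar> * (NV i * N)" .
    qed
  qed
  also have "\<dots> = N * (D + (\<Sum>i<r. \<bar>c * \<theta> i\<bar> * NV i))"
  proof -
    have "(\<Sum>j<n. D * (cmod (x $ j))\<^sup>2) = D * N" unfolding N_def by (simp add: sum_distrib_left)
    moreover have "(\<Sum>i<r. \<bar>c * \<theta> i\<bar> * (NV i * N)) = N * (\<Sum>i<r. \<bar>c * \<theta> i\<bar> * NV i)"
      by (simp add: sum_distrib_left mult_ac)
    ultimately show ?thesis by (simp add: algebra_simps)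
  qed
  finally show ?thesis unfolding NV_def[symmetric] using Npos by simp
qed



lemma gs_sub_dims:
  "set ws \<subseteq> carrier_vec n \<Longrightarrow> set us \<subseteq> carrier_vec n \<Longrightarrow>
   set (gram_schmidt_sub n us ws) \<subseteq> carrier_vec n \<and> length (gram_schmidt_sub n us ws) = length us + length ws"
proof (induction ws arbitrary: us)
  case Nil thus ?case by simp
next
  case (Cons w ws)
  have wc: "w \<in> carrier_vec n" using Cons.prems(1) by (rule subsetD) simp
  have ws: "set ws \<subseteq> carrier_vec n" by (rule subset_trans[OF set_subset_Cons Cons.prems(1)])
  have w: "dim_vec w = n" using wc by (rule carrier_vecD)
  have "dim_vec (adjuster n w us + w) = n" using w by (simp only: index_add_vec(2))
  hence "adjuster n w us + w \<in> carrier_vec n" by (rule carrier_vecI)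
  hence h: "set ((adjuster n w us + w) # us) \<subseteq> carrier_vec n" using Cons.prems(2)
    by (simp only: set_simps insert_subset)
  have "gram_schmidt_sub n us (w # ws) = gram_schmidt_sub n ((adjuster n w us + w) # us) ws" by simp
  thus ?case using Cons.IH[OF ws h] by simp
qed

lemma Uvec_norm:
  assumes i: "i < r"
  shows "(\<Sum>j<n. (cmod (Uvec r n g i \<omega> $ j))\<^sup>2) \<le> 1"
proof -
  let ?ws = "map (\<lambda>i'. Gvec n g i' \<omega>) [0..<r]"
  have ws: "set ?ws \<subseteq> carrier_vec n" by (auto simp: Gvec_def)
  from gs_sub_dims[OF ws, of "[]"] have gs: "set (gram_schmidt n ?ws) \<subseteq> carrier_vec n" "length (gram_schmidt n ?ws) = r"
    by (auto simp: gram_schmidt_def)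
  define u where "u = gram_schmidt n ?ws ! i"
  have "u \<in> set (gram_schmidt n ?ws)" using gs(2) i unfolding u_def by (intro nth_mem) simp
  hence "u \<in> carrier_vec n" using gs(1) by blast
  hence u: "dim_vec u = n" by simp
  define S where "S = (\<Sum>j<n. (cmod (u $ j))\<^sup>2)"
  have S0: "S \<ge> 0" unfolding S_def by (intro sum_nonneg) auto
  have vn: "vnorm u = sqrt S" unfolding vnorm_def S_def u by simp
  have "(\<Sum>j<n. (cmod (Uvec r n g i \<omega> $ j))\<^sup>2) = (\<Sum>j<n. (1 / vnorm u)\<^sup>2 * (cmod (u $ j))\<^sup>2)"
    unfolding Uvec_def u_def[symmetric] normalize_vec_def
    by (intro sum.cong refl) (simp add: u norm_divide power_divide)
  also have "\<dots> = (1 / vnorm u)\<^sup>2 * S" unfolding S_def by (simp add: sum_distrib_left)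
  also have "\<dots> \<le> 1"
  proof (cases "S = 0")
    case True thus ?thesis by simp
  next
    case False
    have "(1 / vnorm u)\<^sup>2 = 1 / S" unfolding vn using S0 by (simp add: power_divide)
    thus ?thesis using False by simp
  qed
  finally show ?thesis .
qed


lemma compact_box:
  "compact (PiE UNIV (\<lambda>j::nat. if j < m then {-K..K::real} else {0}))"
proof -
  have "\<forall>i\<in>UNIV. compactin (euclidean::real topology) (if i < m then {-K..K::real} else {0})"
  proof
    fix i :: nat
    show "compactin (euclidean::real topology) (if i < m then {-K..K::real} else {0})"
      unfolding compactin_euclidean_iff by (cases "i < m") auto
  qed
  hence "compactin (product_topology (\<lambda>_. euclidean) UNIV) (PiE UNIV (\<lambda>j::nat. if j < m then {-K..K::real} else {0}))"
    by (subst compactin_PiE) (rule disjI2)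
  hence "compactin (euclidean :: (nat \<Rightarrow> real) topology) (PiE UNIV (\<lambda>j::nat. if j < m then {-K..K::real} else {0}))"
    by (simp only: euclidean_product_topology)
  thus ?thesis by (simp only: compactin_euclidean_iff)
qed


lemma chernoff:
  fixes M :: "'w measure" and g :: "nat \<Rightarrow> nat \<Rightarrow> 'w \<Rightarrow> complex" and \<alpha> t :: real
  assumes P: "prob_space M"
    and g_meas: "\<And>i k. i < r \<Longrightarrow> g i k \<in> borel_measurable M"
    and g_indep: "prob_space.indep_vars M (\<lambda>_. PiM {..<r} (\<lambda>_. borel))
                    (\<lambda>k \<omega>. \<lambda>i\<in>{..<r}. g i k \<omega>) UNIV"
    and g_ident: "\<And>k. distr M (PiM {..<r} (\<lambda>_. borel)) (\<lambda>\<omega>. \<lambda>i\<in>{..<r}. g i k \<omega>)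
                     = distr M (PiM {..<r} (\<lambda>_. borel)) (\<lambda>\<omega>. \<lambda>i\<in>{..<r}. g i 0 \<omega>)"
    and \<alpha>: "\<alpha> > 0"
  shows "emeasure M {\<omega> \<in> space M. t * real n < (\<Sum>k<n. \<Sum>i<r. (cmod (g i k \<omega>))\<^sup>2)}
      \<le> ennreal (exp (- \<alpha> * t * real n)) * (\<integral>\<^sup>+ \<omega>. ennreal (exp (\<alpha> * (\<Sum>i<r. (cmod (g i 0 \<omega>))\<^sup>2))) \<partial>M) ^ n"
proof -
  interpret prob_space M by (rule P)
  define X where "X k \<omega> = (\<lambda>i\<in>{..<r}. g i k \<omega>)" for k \<omega>
  define h where "h f = ennreal (exp (\<alpha> * (\<Sum>i<r. (cmod (f i))\<^sup>2)))" for f :: "nat \<Rightarrow> complex"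
  define Y where "Y k \<omega> = (\<Sum>i<r. (cmod (g i k \<omega>))\<^sup>2)" for k \<omega>
  define S where "S \<omega> = (\<Sum>k<n. Y k \<omega>)" for \<omega>
  have Xm: "X k \<in> measurable M (PiM {..<r} (\<lambda>_. borel))" for k
    unfolding X_def by (rule measurable_restrict) (use g_meas in auto)
  have hm: "h \<in> borel_measurable (PiM {..<r} (\<lambda>_. borel))"
    unfolding h_def by measurable
  have hX: "h (X k \<omega>) = ennreal (exp (\<alpha> * Y k \<omega>))" for k \<omega>
    unfolding h_def X_def Y_def by (intro arg_cong[where f="\<lambda>x. ennreal (exp (\<alpha> * x))"] sum.cong) auto
  have Ym: "Y k \<in> borel_measurable M" for k
    unfolding Y_def by (intro borel_measurable_sum) (use g_meas in measurable)
  have Sm: "S \<in> borel_measurable M" unfolding S_def using Ym by measurable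
  have ind: "indep_vars (\<lambda>_. borel) (\<lambda>k \<omega>. h (X k \<omega>)) {..<n}"
    by (rule indep_vars_subset[OF indep_vars_compose2[OF g_indep[folded X_def]]]) (use hm in auto)
  have int_eq: "(\<integral>\<^sup>+\<omega>. h (X k \<omega>) \<partial>M) = (\<integral>\<^sup>+\<omega>. h (X 0 \<omega>) \<partial>M)" for k
  proof -
    have "(\<integral>\<^sup>+\<omega>. h (X k \<omega>) \<partial>M) = (\<integral>\<^sup>+f. h f \<partial>distr M (PiM {..<r} (\<lambda>_. borel)) (X k))"
      by (rule nn_integral_distr[symmetric]) (use Xm hm in auto)
    also have "\<dots> = (\<integral>\<^sup>+f. h f \<partial>distr M (PiM {..<r} (\<lambda>_. borel)) (X 0))"
      using g_ident[of k] unfolding X_def by simp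
    also have "\<dots> = (\<integral>\<^sup>+\<omega>. h (X 0 \<omega>) \<partial>M)"
      by (rule nn_integral_distr) (use Xm hm in auto)
    finally show ?thesis .
  qed
  have E: "(\<integral>\<^sup>+\<omega>. ennreal (exp (\<alpha> * S \<omega>)) \<partial>M)
      = (\<integral>\<^sup>+ \<omega>. ennreal (exp (\<alpha> * (\<Sum>i<r. (cmod (g i 0 \<omega>))\<^sup>2))) \<partial>M) ^ n"
  proof -
    have pe: "ennreal (exp (\<alpha> * S \<omega>)) = (\<Prod>k<n. h (X k \<omega>))" for \<omega>
    proof -
      have "exp (\<alpha> * S \<omega>) = (\<Prod>k<n. exp (\<alpha> * Y k \<omega>))"
        unfolding S_def sum_distrib_left by (rule exp_sum) simp
      thus ?thesis unfolding hX by (subst prod_ennreal) auto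
    qed
    have "(\<integral>\<^sup>+\<omega>. ennreal (exp (\<alpha> * S \<omega>)) \<partial>M) = (\<integral>\<^sup>+\<omega>. (\<Prod>k<n. h (X k \<omega>)) \<partial>M)"
      unfolding pe ..
    also have "\<dots> = (\<Prod>k<n. \<integral>\<^sup>+\<omega>. h (X k \<omega>) \<partial>M)"
      by (rule indep_vars_nn_integral) (use ind in auto)
    also have "\<dots> = (\<Prod>k<n. \<integral>\<^sup>+\<omega>. h (X 0 \<omega>) \<partial>M)" by (rule prod.cong[OF refl int_eq])
    also have "\<dots> = (\<integral>\<^sup>+\<omega>. h (X 0 \<omega>) \<partial>M) ^ n" by simp
    finally show ?thesis unfolding hX Y_def .
  qed
  have "{\<omega> \<in> space M. t * real n < (\<Sum>k<n. \<Sum>i<r. (cmod (g i k \<omega>))\<^sup>2)}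
      \<subseteq> {\<omega> \<in> space M. 1 \<le> ennreal (exp (- \<alpha> * t * real n)) * ennreal (exp (\<alpha> * S \<omega>))}"
  proof safe
    fix \<omega> assume "\<omega> \<in> space M" "t * real n < (\<Sum>k<n. \<Sum>i<r. (cmod (g i k \<omega>))\<^sup>2)"
    hence "t * real n < S \<omega>" unfolding S_def Y_def by blast
    hence "\<alpha> * t * real n < \<alpha> * S \<omega>" using \<alpha> by (simp add: mult.assoc)
    hence "0 \<le> - \<alpha> * t * real n + \<alpha> * S \<omega>" by simp
    hence "1 \<le> exp (- \<alpha> * t * real n + \<alpha> * S \<omega>)" by simp
    thus "1 \<le> ennreal (exp (- \<alpha> * t * real n)) * ennreal (exp (\<alpha> * S \<omega>))"
      by (simp add: ennreal_mult'[symmetric] exp_add[symmetric] del: ennreal_mult')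
  qed
  hence "emeasure M {\<omega> \<in> space M. t * real n < (\<Sum>k<n. \<Sum>i<r. (cmod (g i k \<omega>))\<^sup>2)}
      \<le> emeasure M {\<omega> \<in> space M. 1 \<le> ennreal (exp (- \<alpha> * t * real n)) * ennreal (exp (\<alpha> * S \<omega>))}"
    by (rule emeasure_mono) (use Sm in measurable)
  also have "\<dots> \<le> ennreal (exp (- \<alpha> * t * real n)) * (\<integral>\<^sup>+\<omega>. ennreal (exp (\<alpha> * S \<omega>)) * indicator (space M) \<omega> \<partial>M)"
    by (rule nn_integral_Markov_inequality) (use Sm in measurable)
  also have "(\<integral>\<^sup>+\<omega>. ennreal (exp (\<alpha> * S \<omega>)) * indicator (space M) \<omega> \<partial>M) = (\<integral>\<^sup>+\<omega>. ennreal (exp (\<alpha> * S \<omega>)) \<partial>M)"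
    by (intro nn_integral_cong) auto
  finally show ?thesis unfolding E .
qed


lemma ln_bound:
  fixes p B L :: real
  assumes n: "n > 0" and pB: "p \<le> B" and B: "B > 0" and lnB: "ln B / real n \<le> - L"
  shows "ereal (1 / real n) * ln_ereal p \<le> - ereal L"
proof (cases "p \<le> 0")
  case True
  thus ?thesis using n by (simp add: ln_ereal_def)
next
  case False
  hence "ln p \<le> ln B" using pB B by simp
  hence "ln p / real n \<le> - L" using lnB n by (meson divide_right_mono of_nat_0_le_iff order_trans)
  thus ?thesis using False n by (simp add: ln_ereal_def)
qed

theorem lemma6p3:
  fixes M :: "'w measure" and g :: "nat \<Rightarrow> nat \<Rightarrow> 'w \<Rightarrow> complex"
    and real_case orth :: bool and m r :: nat and \<theta> :: "nat \<Rightarrow> real"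
    and d :: "nat \<Rightarrow> nat \<Rightarrow> real" and \<mu> :: "real measure" and a b :: real
  assumes P: "prob_space M"
    and mr: "1 \<le> m" "m \<le> r"
    and \<theta>_mono: "\<And>i j. i \<le> j \<Longrightarrow> j < r \<Longrightarrow> \<theta> j \<le> \<theta> i"
    and \<theta>_pos: "\<And>i. i < m \<Longrightarrow> \<theta> i > 0"
    and \<theta>_neg: "\<And>i. m \<le> i \<Longrightarrow> i < r \<Longrightarrow> \<theta> i < 0"
    and g_meas: "\<And>i k. i < r \<Longrightarrow> g i k \<in> borel_measurable M"
    and g_K: "\<And>i k \<omega>. i < r \<Longrightarrow> \<omega> \<in> space M \<Longrightarrow> g i k \<omega> \<in> Kset real_case"
    and g_indep: "prob_space.indep_vars M (\<lambda>_. PiM {..<r} (\<lambda>_. borel))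
                    (\<lambda>k \<omega>. \<lambda>i\<in>{..<r}. g i k \<omega>) UNIV"
    and g_ident: "\<And>k. distr M (PiM {..<r} (\<lambda>_. borel)) (\<lambda>\<omega>. \<lambda>i\<in>{..<r}. g i k \<omega>)
                     = distr M (PiM {..<r} (\<lambda>_. borel)) (\<lambda>\<omega>. \<lambda>i\<in>{..<r}. g i 0 \<omega>)"
    and A_mu: "real_distribution \<mu>" "compact (measure_support \<mu>)"
    and A_ab: "a = Inf (measure_support \<mu>)" "b = Sup (measure_support \<mu>)" "a \<le> b"
    and A_conv: "weak_conv_m (\<lambda>n. empirical_measure n (d n)) \<mu>"
    and B_exp: "\<exists>\<alpha>>0. (\<integral>\<^sup>+ \<omega>. ennreal (exp (\<alpha> * (\<Sum>i<r. (cmod (g i 0 \<omega>))\<^sup>2))) \<partial>M) < \<infinity>"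
    and B_orth: "orth \<Longrightarrow> (\<forall>c :: nat \<Rightarrow> complex. (\<forall>i<r. c i \<in> Kset real_case) \<and> (\<exists>i<r. c i \<noteq> 0) \<longrightarrow>
                   measure M {\<omega> \<in> space M. (\<Sum>i<r. c i * g i 0 \<omega>) = 0} = 0)"
    and C_top: "(\<lambda>n. Max (d n ` {..<n})) \<longlonglongrightarrow> b"
    and C_bot: "(\<lambda>n. Min (d n ` {..<n})) \<longlonglongrightarrow> a"
  shows "\<forall>L>0. \<exists>C :: (nat \<Rightarrow> real) set. compact C \<and>
           limsup (\<lambda>n. ereal (1 / real n) *
             ln_ereal (measure M {\<omega> \<in> space M.
               (\<lambda>j. if j < m then eig_desc (Xtilde orth n d r \<theta> g \<omega>) ! j else 0) \<notin> C}))
           \<le> - ereal L"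
  proof (intro allI impI)
  fix L :: real assume L: "L > 0"
  interpret prob_space M by (rule P)
  obtain \<alpha> where \<alpha>: "\<alpha> > 0" and Efin: "(\<integral>\<^sup>+ \<omega>. ennreal (exp (\<alpha> * (\<Sum>i<r. (cmod (g i 0 \<omega>))\<^sup>2))) \<partial>M) < \<infinity>"
    using B_exp by blast
  define E where "E = (\<integral>\<^sup>+ \<omega>. ennreal (exp (\<alpha> * (\<Sum>i<r. (cmod (g i 0 \<omega>))\<^sup>2))) \<partial>M)"
  define e0 where "e0 = enn2real E"
  have Ee0: "E = ennreal e0" unfolding e0_def using Efin E_def by simp
  have "(1::ennreal) = (\<integral>\<^sup>+ \<omega>. 1 \<partial>M)" by (simp add: emeasure_space_1)
  also have "\<dots> \<le> E" unfolding E_def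
    using \<alpha> by (intro nn_integral_mono) (auto intro!: sum_nonneg mult_nonneg_nonneg)
  finally have "ennreal 1 \<le> ennreal e0" unfolding Ee0 by simp
  hence e01: "e0 \<ge> 1" by (simp add: ennreal_le_iff2)
  have ev1: "eventually (\<lambda>n. Max (d n ` {..<n}) < b + 1) sequentially"
    using C_top by (rule order_tendstoD) simp
  have ev2: "eventually (\<lambda>n. Min (d n ` {..<n}) > a - 1) sequentially"
    using C_bot by (rule order_tendstoD) simp
  obtain N0 where N0: "\<And>n. n \<ge> N0 \<Longrightarrow> Max (d n ` {..<n}) < b + 1 \<and> Min (d n ` {..<n}) > a - 1"
    using eventually_conj[OF ev1 ev2] unfolding eventually_sequentially by blast
  define D where "D = \<bar>a\<bar> + \<bar>b\<bar> + 1"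
  have Dbound: "\<forall>j<n. \<bar>d n j\<bar> \<le> D" if "n \<ge> N0" for n
  proof safe
    fix j assume j: "j < n"
    have "d n j \<le> Max (d n ` {..<n})" using j by (intro Max_ge) auto
    moreover have "Min (d n ` {..<n}) \<le> d n j" using j by (intro Min_le) auto
    ultimately show "\<bar>d n j\<bar> \<le> D" using N0[OF that] unfolding D_def by auto
  qed
  define \<Theta> where "\<Theta> = (\<Sum>i<r. \<bar>\<theta> i\<bar>)"
  have \<Theta>pos: "\<Theta> > 0"
  proof -
    have "0 < \<bar>\<theta> 0\<bar>" using \<theta>_pos[of 0] mr by auto
    also have "\<dots> \<le> \<Theta>" unfolding \<Theta>_def using mr by (intro member_le_sum) auto
    finally show ?thesis .
  qed
  define t where "t = max 0 ((L + ln e0) / \<alpha>)"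
  have t0: "t \<ge> 0" unfolding t_def by simp
  have \<alpha>t: "\<alpha> * t \<ge> L + ln e0" using \<alpha> unfolding t_def
    by (metis max.cobounded2 mult.commute pos_divide_le_eq)
  define K where "K = D + \<Theta> * (1 + t)"
  define C where "C = PiE UNIV (\<lambda>j::nat. if j < m then {-K..K::real} else {0})"
  define Sg where "Sg n \<omega> = (\<Sum>k<n. \<Sum>i<r. (cmod (g i k \<omega>))\<^sup>2)" for n \<omega>
  have sub: "{\<omega> \<in> space M. (\<lambda>j. if j < m then eig_desc (Xtilde orth n d r \<theta> g \<omega>) ! j else 0) \<notin> C}
      \<subseteq> {\<omega> \<in> space M. t * real n < Sg n \<omega>}" if n: "n \<ge> N0" "n \<ge> m" for n
  proof safe
    fix \<omega> assume \<omega>: "\<omega> \<in> space M"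
      and nC: "(\<lambda>j. if j < m then eig_desc (Xtilde orth n d r \<theta> g \<omega>) ! j else 0) \<notin> C"
    obtain j where j: "j < m" "\<not> \<bar>eig_desc (Xtilde orth n d r \<theta> g \<omega>) ! j\<bar> \<le> K"
      using nC unfolding C_def by (auto simp: PiE_def Pi_def split: if_splits)
    have jn: "j < n" using j n by simp
    have carr: "Xtilde orth n d r \<theta> g \<omega> \<in> carrier_mat n n"
      unfolding Xtilde_def by (simp add: perturbed_carrier)
    obtain l where l: "eigenvalue (Xtilde orth n d r \<theta> g \<omega>) l"
      "eig_desc (Xtilde orth n d r \<theta> g \<omega>) ! j = Re l"
      using eig_desc_nth[OF carr jn] by blast
    have lK: "K < cmod l" using j(2) l(2) abs_Re_le_cmod[of l] by linarith
    show "t * real n < Sg n \<omega>"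
    proof (cases orth)
      case True
      have "cmod l \<le> D + (\<Sum>i<r. \<bar>1 * \<theta> i\<bar> * (\<Sum>j<n. (cmod (Uvec r n g i \<omega> $ j))\<^sup>2))"
        using l(1) True unfolding Xtilde_def by (intro eig_bound[OF _ Dbound[OF n(1)]]) auto
      also have "\<dots> \<le> D + (\<Sum>i<r. \<bar>\<theta> i\<bar> * 1)"
        by (intro add_left_mono sum_mono) (simp add: mult_left_le Uvec_norm)
      also have "\<dots> \<le> K" unfolding K_def \<Theta>_def using t0 \<Theta>pos \<Theta>_def by (simp add: algebra_simps)
      finally show ?thesis using lK by simp
    next
      case False
      have npos: "n > 0" using jn by simp
      have "cmod l \<le> D + (\<Sum>i<r. \<bar>1 / real n * \<theta> i\<bar> * (\<Sum>j<n. (cmod (Gvec n g i \<omega> $ j))\<^sup>2))"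
        using l(1) False unfolding Xtilde_def by (intro eig_bound[OF _ Dbound[OF n(1)]]) auto
      also have "\<dots> \<le> D + (\<Sum>i<r. \<bar>\<theta> i\<bar> / real n * Sg n \<omega>)"
      proof (intro add_left_mono sum_mono)
        fix i assume i: "i \<in> {..<r}"
        have "(\<Sum>j<n. (cmod (Gvec n g i \<omega> $ j))\<^sup>2) = (\<Sum>k<n. (cmod (g i k \<omega>))\<^sup>2)"
          unfolding Gvec_def by simp
        also have "\<dots> \<le> (\<Sum>k<n. \<Sum>i'<r. (cmod (g i' k \<omega>))\<^sup>2)"
          using i by (intro sum_mono member_le_sum) auto
        finally have "(\<Sum>j<n. (cmod (Gvec n g i \<omega> $ j))\<^sup>2) \<le> Sg n \<omega>" unfolding Sg_def .
        thus "\<bar>1 / real n * \<theta> i\<bar> * (\<Sum>j<n. (cmod (Gvec n g i \<omega> $ j))\<^sup>2) \<le> \<bar>\<theta> i\<bar> / real n * Sg n \<omega>"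
          using npos by (simp add: abs_mult mult_left_mono divide_right_mono)
      qed
      also have "\<dots> = D + \<Theta> * (Sg n \<omega> / real n)" unfolding \<Theta>_def
        by (simp add: sum_distrib_right sum_divide_distrib)
      finally have "K < D + \<Theta> * (Sg n \<omega> / real n)" using lK by simp
      hence "\<Theta> * (1 + t) < \<Theta> * (Sg n \<omega> / real n)" unfolding K_def by linarith
      hence "1 + t < Sg n \<omega> / real n" using \<Theta>pos mult_less_cancel_left_pos by blast
      hence "t < Sg n \<omega> / real n" by simp
      thus ?thesis using npos by (simp add: pos_less_divide_eq)
    qed
  qed
  have bnd: "ereal (1 / real n) * ln_ereal (measure M {\<omega> \<in> space M.
               (\<lambda>j. if j < m then eig_desc (Xtilde orth n d r \<theta> g \<omega>) ! j else 0) \<notin> C}) \<le> - ereal L"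
    if n: "n \<ge> N0" "n \<ge> m" for n
  proof -
    let ?P = "measure M {\<omega> \<in> space M.
               (\<lambda>j. if j < m then eig_desc (Xtilde orth n d r \<theta> g \<omega>) ! j else 0) \<notin> C}"
    have npos: "n > 0" using n mr by simp
    have Sgm: "{\<omega> \<in> space M. t * real n < Sg n \<omega>} \<in> sets M"
    proof -
      have "Sg n \<in> borel_measurable M"
        unfolding Sg_def by (intro borel_measurable_sum) (use g_meas in measurable)
      thus ?thesis by measurable
    qed
    have "?P \<le> measure M {\<omega> \<in> space M. t * real n < Sg n \<omega>}"
      by (rule finite_measure_mono[OF sub[OF n] Sgm])
    also have "\<dots> \<le> exp (- \<alpha> * t * real n) * e0 ^ n"
    proof -
      have "ennreal (measure M {\<omega> \<in> space M. t * real n < Sg n \<omega>})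
          = emeasure M {\<omega> \<in> space M. t * real n < Sg n \<omega>}"
        using Sgm by (simp add: emeasure_eq_measure)
      also have "\<dots> \<le> ennreal (exp (- \<alpha> * t * real n)) * E ^ n"
        unfolding Sg_def E_def by (rule chernoff[OF P g_meas g_indep g_ident \<alpha>])
      also have "\<dots> = ennreal (exp (- \<alpha> * t * real n) * e0 ^ n)"
        unfolding Ee0 using e01 by (simp add: ennreal_power ennreal_mult)
      finally show ?thesis using e01 by (subst (asm) ennreal_le_iff) auto
    qed
    finally have Pb: "?P \<le> exp (- \<alpha> * t * real n) * e0 ^ n" .
    show ?thesis
    proof (rule ln_bound[OF npos Pb])
      show "exp (- \<alpha> * t * real n) * e0 ^ n > 0" using e01 by simp
      have "ln (exp (- \<alpha> * t * real n) * e0 ^ n) = - \<alpha> * t * real n + real n * ln e0"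
        using e01 by (simp add: ln_mult ln_realpow)
      also have "\<dots> = real n * (ln e0 - \<alpha> * t)" by (simp add: algebra_simps)
      also have "\<dots> \<le> real n * (- L)" using \<alpha>t by (intro mult_left_mono) auto
      finally show "ln (exp (- \<alpha> * t * real n) * e0 ^ n) / real n \<le> - L"
        using npos by (simp add: divide_le_eq mult.commute)
    qed
  qed
  have cC: "compact C" unfolding C_def by (rule compact_box)
  have lim: "limsup (\<lambda>n. ereal (1 / real n) *
             ln_ereal (measure M {\<omega> \<in> space M.
               (\<lambda>j. if j < m then eig_desc (Xtilde orth n d r \<theta> g \<omega>) ! j else 0) \<notin> C}))
           \<le> - ereal L"
    unfolding eventually_sequentially
    by (rule Limsup_bounded, unfold eventually_sequentially, rule exI[of _ "max N0 m"], intro allI impI bnd) auto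
  show "\<exists>C :: (nat \<Rightarrow> real) set. compact C \<and>
           limsup (\<lambda>n. ereal (1 / real n) *
             ln_ereal (measure M {\<omega> \<in> space M.
               (\<lambda>j. if j < m then eig_desc (Xtilde orth n d r \<theta> g \<omega>) ! j else 0) \<notin> C}))
           \<le> - ereal L" by (rule exI[of _ C], rule conjI[OF cC lim])
qed

end
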